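(* Let $\nabla:\Omega(A)\to\Omega(A)\otimes_A\Omega(A)$ be a module connection with associated affine connection $(\mathsf K_\nabla,\mathsf H_\nabla)$ and torsion $\mathsf V$. Then $\mathsf V(a)=a$ and $\mathsf V(\mathsf d(a))=\widehat\psi(\widehat\nabla(\mathsf d(a)))$ for all $a\in A$. In particular, if $\widehat\nabla(\mathsf d(a))=0$ for all $a\in A$, then $(\mathsf K_\nabla,\mathsf H_\nabla)$ is torsion-free.
   Context: Fix a commutative ring $R$ and a commutative $R$-algebra $A$; $\Omega(A)$ is the Kähler module of $A$ over $R$ with universal derivation $\mathsf d$, and $\Omega^2(A)=\Omega(A)\wedge_A\Omega(A)$. A module connection on $\Omega(A)$ is an $R$-linear $\nabla:\Omega(A)\to\Omega(A)\otimes_A\Omega(A)$ with $\nabla(a\alpha)=a\nabla(\alpha)+\mathsf d(a)\otimes\alpha$. $\mathsf T(A)=\mathrm{Sym}_A(\Omega(A))$ (which equals the symmetric algebra $\mathsf S_A(\Omega(A))$), $\mathsf T^2(A)=\mathsf T(\mathsf T(A))$ with universal derivation $\mathsf d':\mathsf T(A)\to\mathsf T^2(A)$, generated over $A$ by $\mathsf d(a),\mathsf d'(a),\mathsf d'\mathsf d(a)$; $\mathsf c_A:\mathsf T^2(A)\to\mathsf T^2(A)$ is the algebra map $a\mapsto a$, $\mathsf d(a)\mapsto\mathsf d'(a)$, $\mathsf d'(a)\mapsto\mathsf d(a)$, $\mathsf d'\mathsf d(a)\mapsto\mathsf d'\mathsf d(a)$. The associated affine connection (a tangent category connection on the tangent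 bundle of $A$ in affine schemes) has vertical part the algebra map $\mathsf K_\nabla:\mathsf T(A)\to\mathsf T^2(A)$, $a\mapsto a$, $\mathsf d(a)\mapsto\mathsf d'\mathsf d(a)-U'(\nabla(\mathsf d a))$, and horizontal part $\mathsf H_\nabla:\mathsf T^2(A)\to\mathsf T(A)\otimes_A\mathsf T(A)$ with $\mathsf H_\nabla(\mathsf d'\mathsf d(a))=\nabla(\mathsf d(a))$, where $U':\mathsf T(A)\otimes_A\mathsf T(A)\to\mathsf T^2(A)$ is the algebra map $w\otimes v\mapsto\mathsf T(\mathsf p_A)(w)\,v$ with $\mathsf T(\mathsf p_A)(a)=a$, $\mathsf T(\mathsf p_A)(\mathsf d a)=\mathsf d'(a)$ (so $\mathsf d(b)\otimes\mathsf d(c)\mapsto\mathsf d'(b)\mathsf d(c)$). The torsion of this affine connection (computed from the horizontal connection) is the algebra map $\mathsf V:\mathsf T(A)\to\mathsf T^2(A)$ with $\mathsf V(a)=a$ and $\mathsf V(\mathsf d(a))=\mathsf c_A\big(U'(\mathsf H_\nabla(\mathsf d'\mathsf d a))\big)-U'\big(\mathsf H_\nabla(\mathsf c_A(\mathsf d'\mathsf d a))\big)$; the connection is torsion-free if $\mathsf V(\mathsf d(a))=0$ for all $a\in A$. The torsion of $\nabla$ is $\widehat\nabla=\omega\circ\nabla:\Omega(A)\to\Omega^2(A)$ with $\omega(\alpha\otimes\beta)=\alpha\wedge\beta$. The map $\widehat\psi:\Omega^2(A)\to\mathsf T^2(A)$ is $a\,\mathsf d(b)\wedge\mathsf d(c)\mapsto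 a\,\mathsf d(b)\mathsf d'(c)-a\,\mathsf d'(b)\mathsf d(c)$, extended additively. *)

theory Defs
  imports "HOL-Library.Poly_Mapping"
begin

definition fsmult :: "'a::comm_ring_1 \<Rightarrow> ('k \<Rightarrow>\<^sub>0 'a) \<Rightarrow> ('k \<Rightarrow>\<^sub>0 'a)" where
  "fsmult c u = Poly_Mapping.map (\<lambda>x. c * x) u"

inductive_set mspan :: "('k \<Rightarrow>\<^sub>0 'a::comm_ring_1) set \<Rightarrow> ('k \<Rightarrow>\<^sub>0 'a) set"
  for S where
  mspan_zero: "0 \<in> mspan S"
| mspan_step: "v \<in> S \<Longrightarrow> w \<in> mspan S \<Longrightarrow> fsmult c v + w \<in> mspan S"

type_synonym ('v,'a) pol = "('v \<Rightarrow>\<^sub>0 nat) \<Rightarrow>\<^sub>0 'a"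

definition pconst :: "'a::comm_ring_1 \<Rightarrow> ('v,'a) pol" where
  "pconst c = Poly_Mapping.single 0 c"

definition pvar :: "'v \<Rightarrow> ('v,'a::comm_ring_1) pol" where
  "pvar v = Poly_Mapping.single (Poly_Mapping.single v 1) 1"

definition psubst :: "('v \<Rightarrow> ('w,'a::comm_ring_1) pol) \<Rightarrow> ('v,'a) pol \<Rightarrow> ('w,'a) pol" where
  "psubst f p = (\<Sum>m\<in>Poly_Mapping.keys p.
      pconst (Poly_Mapping.lookup p m) * (\<Prod>v\<in>Poly_Mapping.keys m. f v ^ Poly_Mapping.lookup m v))"

inductive_set gideal :: "'b::comm_ring_1 set \<Rightarrow> 'b set" for G where
  gideal_zero: "0 \<in> gideal G"
| gideal_step: "g \<in> G \<Longrightarrow> x \<in> gideal G \<Longrightarrow> r * g + x \<in> gideal G"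

definition alg_hom_rep :: "(('v,'a::comm_ring_1) pol \<Rightarrow> ('w,'a) pol) \<Rightarrow> bool" where
  "alg_hom_rep f \<longleftrightarrow> (\<forall>p q. f (p + q) = f p + f q) \<and> (\<forall>p q. f (p * q) = f p * f q)
     \<and> (\<forall>c. f (pconst c) = pconst c)"

definition resp_maps :: "('x \<Rightarrow> 'y) \<Rightarrow> ('x \<Rightarrow> 'x \<Rightarrow> bool) \<Rightarrow> ('y \<Rightarrow> 'y \<Rightarrow> bool) \<Rightarrow> bool" where
  "resp_maps f r s \<longleftrightarrow> (\<forall>x y. r x y \<longrightarrow> s (f x) (f y))"

definition ring_hom_map :: "('r::comm_ring_1 \<Rightarrow> 'a::comm_ring_1) \<Rightarrow> bool" where
  "ring_hom_map \<phi> \<longleftrightarrow> \<phi> 1 = 1 \<and> (\<forall>x y. \<phi> (x + y) = \<phi> x + \<phi> y) \<and> (\<forall>x y. \<phi> (x * y) = \<phi> x * \<phi> y)"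

text \<open>Omega(A) over R (structure map phi) = free A-module on symbols d(a) (basis dsym a)
  modulo the submodule KN phi of Kaehler relations.\<close>
definition dsym :: "'a \<Rightarrow> ('a \<Rightarrow>\<^sub>0 'a::comm_ring_1)" where
  "dsym a = Poly_Mapping.single a 1"

definition KN :: "('r::comm_ring_1 \<Rightarrow> 'a::comm_ring_1) \<Rightarrow> ('a \<Rightarrow>\<^sub>0 'a) set" where
  "KN \<phi> = mspan ({dsym (a + b) - dsym a - dsym b | a b. True}
     \<union> {dsym (a * b) - fsmult a (dsym b) - fsmult b (dsym a) | a b. True}
     \<union> {dsym (\<phi> r) | r. True})"

text \<open>Tensor of representatives: (d b) tensor (d c) is the basis symbol (b,c).\<close>
definition ftens :: "('a \<Rightarrow>\<^sub>0 'a::comm_ring_1) \<Rightarrow> ('a \<Rightarrow>\<^sub>0 'a) \<Rightarrow> ('a \<times> 'a \<Rightarrow>\<^sub>0 'a)" where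
  "ftens u v = (\<Sum>b\<in>Poly_Mapping.keys u. \<Sum>c\<in>Poly_Mapping.keys v.
      Poly_Mapping.single (b, c) (Poly_Mapping.lookup u b * Poly_Mapping.lookup v c))"

text \<open>Omega tensor_A Omega = F tensor F modulo (N tensor F + F tensor N).\<close>
definition TN :: "('r::comm_ring_1 \<Rightarrow> 'a::comm_ring_1) \<Rightarrow> ('a \<times> 'a \<Rightarrow>\<^sub>0 'a) set" where
  "TN \<phi> = mspan ({ftens n v | n v. n \<in> KN \<phi>} \<union> {ftens v n | n v. n \<in> KN \<phi>})"

text \<open>Omega^2 = Omega tensor Omega modulo the span of all w tensor w; the wedge map omega
  is the identity on representatives.\<close>
definition WN :: "('r::comm_ring_1 \<Rightarrow> 'a::comm_ring_1) \<Rightarrow> ('a \<times> 'a \<Rightarrow>\<^sub>0 'a) set" where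
  "WN \<phi> = mspan ({ftens n v | n v. n \<in> KN \<phi>} \<union> {ftens v n | n v. n \<in> KN \<phi>}
      \<union> {ftens v v | v. True})"

definition module_connection ::
  "('r::comm_ring_1 \<Rightarrow> 'a::comm_ring_1) \<Rightarrow> (('a \<Rightarrow>\<^sub>0 'a) \<Rightarrow> ('a \<times> 'a \<Rightarrow>\<^sub>0 'a)) \<Rightarrow> bool" where
  "module_connection \<phi> nab \<longleftrightarrow>
     (\<forall>u v. u - v \<in> KN \<phi> \<longrightarrow> nab u - nab v \<in> TN \<phi>)
   \<and> (\<forall>u v. nab (u + v) - nab u - nab v \<in> TN \<phi>)
   \<and> (\<forall>r u. nab (fsmult (\<phi> r) u) - fsmult (\<phi> r) (nab u) \<in> TN \<phi>)
   \<and> (\<forall>a u. nab (fsmult a u) - (fsmult a (nab u) + ftens (dsym a) u) \<in> TN \<phi>)"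

text \<open>T(A) = Sym_A(Omega(A)) = A[x_a : a in A] / J1, with x_a = d(a).\<close>
definition J1 :: "('r::comm_ring_1 \<Rightarrow> 'a::comm_ring_1) \<Rightarrow> ('a,'a) pol set" where
  "J1 \<phi> = gideal ({pvar (a + b) - pvar a - pvar b | a b. True}
     \<union> {pvar (a * b) - pconst a * pvar b - pconst b * pvar a | a b. True}
     \<union> {pvar (\<phi> r) | r. True})"

definition cong1 :: "('r::comm_ring_1 \<Rightarrow> 'a::comm_ring_1) \<Rightarrow> ('a,'a) pol \<Rightarrow> ('a,'a) pol \<Rightarrow> bool" where
  "cong1 \<phi> p q \<longleftrightarrow> p - q \<in> J1 \<phi>"

text \<open>T^2(A) = Sym_{T(A)}(Omega(T(A))): variables Inl a (= d(a), generating T(A)) and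
  Inr t (= d'(t) for a representative t of an element of T(A)); the ideal J2 consists of
  J1 together with the Kaehler relations of T(A) over R.\<close>
type_synonym 'a T2var = "'a + ('a,'a) pol"

definition embL :: "('a,'a::comm_ring_1) pol \<Rightarrow> ('a T2var,'a) pol" where
  "embL p = psubst (\<lambda>a. pvar (Inl a)) p"

definition J2 :: "('r::comm_ring_1 \<Rightarrow> 'a::comm_ring_1) \<Rightarrow> ('a T2var,'a) pol set" where
  "J2 \<phi> = gideal (embL ` J1 \<phi>
     \<union> {pvar (Inr t) - pvar (Inr s) | t s. cong1 \<phi> t s}
     \<union> {pvar (Inr (t + s)) - pvar (Inr t) - pvar (Inr s) | t s. True}
     \<union> {pvar (Inr (t * s)) - embL t * pvar (Inr s) - embL s * pvar (Inr t) | t s. True}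
     \<union> {pvar (Inr (pconst (\<phi> r))) | r. True})"

definition cong2 :: "('r::comm_ring_1 \<Rightarrow> 'a::comm_ring_1) \<Rightarrow> ('a T2var,'a) pol \<Rightarrow> ('a T2var,'a) pol \<Rightarrow> bool" where
  "cong2 \<phi> p q \<longleftrightarrow> p - q \<in> J2 \<phi>"

definition dT2 :: "'a \<Rightarrow> ('a T2var,'a::comm_ring_1) pol" where
  "dT2 a = pvar (Inl a)"
definition d'T2 :: "'a \<Rightarrow> ('a T2var,'a::comm_ring_1) pol" where
  "d'T2 a = pvar (Inr (pconst a))"
definition d'dT2 :: "'a \<Rightarrow> ('a T2var,'a::comm_ring_1) pol" where
  "d'dT2 a = pvar (Inr (pvar a))"

text \<open>T(A) tensor_A T(A) = A[x_a, x'_b] / (J1 on x + J1 on x'): Inl = left, Inr = right factor.\<close>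
definition J3 :: "('r::comm_ring_1 \<Rightarrow> 'a::comm_ring_1) \<Rightarrow> ('a + 'a,'a) pol set" where
  "J3 \<phi> = gideal (psubst (\<lambda>a. pvar (Inl a)) ` J1 \<phi> \<union> psubst (\<lambda>a. pvar (Inr a)) ` J1 \<phi>)"

definition cong3 :: "('r::comm_ring_1 \<Rightarrow> 'a::comm_ring_1) \<Rightarrow> ('a + 'a,'a) pol \<Rightarrow> ('a + 'a,'a) pol \<Rightarrow> bool" where
  "cong3 \<phi> p q \<longleftrightarrow> p - q \<in> J3 \<phi>"

definition tens_emb :: "('a \<times> 'a \<Rightarrow>\<^sub>0 'a::comm_ring_1) \<Rightarrow> ('a + 'a,'a) pol" where
  "tens_emb w = (\<Sum>bc\<in>Poly_Mapping.keys w.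
      pconst (Poly_Mapping.lookup w bc) * pvar (Inl (fst bc)) * pvar (Inr (snd bc)))"

definition psi_hat :: "('a \<times> 'a \<Rightarrow>\<^sub>0 'a::comm_ring_1) \<Rightarrow> ('a T2var,'a) pol" where
  "psi_hat w = (\<Sum>bc\<in>Poly_Mapping.keys w.
      pconst (Poly_Mapping.lookup w bc) *
        (dT2 (fst bc) * d'T2 (snd bc) - d'T2 (fst bc) * dT2 (snd bc)))"

text \<open>Torsion of the affine connection: the A-algebra map V : T(A) to T^2(A) with
  V(a) = a and V(d a) = c(U'(H(d'd a))) - U'(H(c(d'd a))).\<close>
definition torsion_map ::
  "(('a T2var,'a::comm_ring_1) pol \<Rightarrow> ('a T2var,'a) pol) \<Rightarrow> (('a + 'a,'a) pol \<Rightarrow> ('a T2var,'a) pol)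
   \<Rightarrow> (('a T2var,'a) pol \<Rightarrow> ('a + 'a,'a) pol) \<Rightarrow> ('a,'a) pol \<Rightarrow> ('a T2var,'a) pol" where
  "torsion_map cA U H = psubst (\<lambda>a. cA (U (H (d'dT2 a))) - U (H (cA (d'dT2 a))))"

end

theory Submission imports Defs begin

lemma lookup_fsmult: "Poly_Mapping.lookup (fsmult c u) k = c * Poly_Mapping.lookup u k"
  unfolding fsmult_def by transfer (simp add: when_def)
lemma keys_fsmult: "Poly_Mapping.keys (fsmult c u) \<subseteq> Poly_Mapping.keys u"
  unfolding fsmult_def by transfer (auto simp: when_def)

lemma pconst_add: "pconst (a + b) = pconst a + pconst b"
  by (simp add: pconst_def single_add)
lemma pconst_diff: "pconst (a - b) = pconst a - pconst b"
  by (simp add: pconst_def single_diff)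
lemma pconst_mult: "pconst (a * b) = pconst a * pconst b"
  by (simp add: pconst_def mult_single)
lemma pconst_0[simp]: "pconst 0 = 0" by (simp add: pconst_def)
lemma pconst_1[simp]: "pconst 1 = 1" by (simp add: pconst_def)

definition sumk :: "('k \<Rightarrow> ('v,'a::comm_ring_1) pol) \<Rightarrow> ('k \<Rightarrow>\<^sub>0 'a) \<Rightarrow> ('v,'a) pol" where
  "sumk g w = (\<Sum>k\<in>Poly_Mapping.keys w. pconst (Poly_Mapping.lookup w k) * g k)"

lemma sumk_sup: assumes "finite S" "Poly_Mapping.keys w \<subseteq> S"
  shows "sumk g w = (\<Sum>k\<in>S. pconst (Poly_Mapping.lookup w k) * g k)"
  unfolding sumk_def
  by (rule sum.mono_neutral_left) (use assms in \<open>auto simp: in_keys_iff\<close>)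

lemma sumk_add: "sumk g (u + w) = sumk g u + sumk g w"
proof -
  let ?S = "Poly_Mapping.keys u \<union> Poly_Mapping.keys w"
  have "sumk g (u + w) = (\<Sum>k\<in>?S. pconst (Poly_Mapping.lookup (u+w) k) * g k)"
    by (rule sumk_sup) (use keys_add[of u w] in auto)
  also have "\<dots> = (\<Sum>k\<in>?S. pconst (Poly_Mapping.lookup u k) * g k) + (\<Sum>k\<in>?S. pconst (Poly_Mapping.lookup w k) * g k)"
    by (simp add: lookup_add pconst_add distrib_right sum.distrib)
  also have "\<dots> = sumk g u + sumk g w"
    by (simp add: sumk_sup[symmetric])
  finally show ?thesis .
qed

lemma sumk_0[simp]: "sumk g 0 = 0" by (simp add: sumk_def)

lemma sumk_diff: "sumk g (u - w) = sumk g u - sumk g w"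
  using sumk_add[of g "u - w" w] by (simp add: algebra_simps)

lemma sumk_single: "sumk g (Poly_Mapping.single k c) = pconst c * g k"
  by (simp add: sumk_def)

lemma sumk_fsmult: "sumk g (fsmult c u) = pconst c * sumk g u"
proof -
  have "sumk g (fsmult c u) = (\<Sum>k\<in>Poly_Mapping.keys u. pconst (Poly_Mapping.lookup (fsmult c u) k) * g k)"
    by (rule sumk_sup) (use keys_fsmult[of c u] in auto)
  then show ?thesis by (simp add: lookup_fsmult pconst_mult sumk_def sum_distrib_left mult.assoc)
qed

lemma sumk_sum: "sumk g (\<Sum>i\<in>I. h i) = (\<Sum>i\<in>I. sumk g (h i))"
  by (induction I rule: infinite_finite_induct) (auto simp: sumk_add)

lemma sumk_fdiff: "sumk (\<lambda>k. g1 k - g2 k) w = sumk g1 w - sumk g2 w"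
  by (simp add: sumk_def algebra_simps sum_subtractf)

lemma sumk_ftens: "sumk (\<lambda>bc. x (fst bc) * y (snd bc)) (ftens u v) = sumk x u * sumk y v"
proof -
  have "sumk (\<lambda>bc. x (fst bc) * y (snd bc)) (ftens u v) = (\<Sum>b\<in>Poly_Mapping.keys u. \<Sum>c\<in>Poly_Mapping.keys v.
      pconst (Poly_Mapping.lookup u b * Poly_Mapping.lookup v c) * (x b * y c))"
    unfolding ftens_def by (simp add: sumk_sum sumk_single)
  also have "\<dots> = sumk x u * sumk y v"
    unfolding sumk_def sum_product by (rule sum.cong[OF refl], rule sum.cong[OF refl]) (simp add: pconst_mult ac_simps)
  finally show ?thesis .
qed


lemma gi_gen: "g \<in> G \<Longrightarrow> g \<in> gideal G"
  using gideal_step[of g G 0 1] gideal_zero[of G] by simp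

lemma gi_add: "x \<in> gideal G \<Longrightarrow> y \<in> gideal G \<Longrightarrow> x + y \<in> gideal G"
  by (induction x rule: gideal.induct) (auto simp: add.assoc intro: gideal_step)

lemma gi_mult: "x \<in> gideal G \<Longrightarrow> r * x \<in> gideal G"
proof (induction x rule: gideal.induct)
  case gideal_zero then show ?case by (simp add: gideal.gideal_zero)
next
  case (gideal_step g x s)
  have "r * (s * g + x) = (r * s) * g + r * x" by (simp add: algebra_simps)
  then show ?case using gideal_step by (simp add: gideal.gideal_step)
qed

lemma gi_mult2: "x \<in> gideal G \<Longrightarrow> x * r \<in> gideal G"
  using gi_mult[of x G r] by (simp add: mult.commute)

lemma gi_neg: "x \<in> gideal G \<Longrightarrow> - x \<in> gideal G"
  using gi_mult[of x G "-1"] by simp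

lemma gi_diff: "x \<in> gideal G \<Longrightarrow> y \<in> gideal G \<Longrightarrow> x - y \<in> gideal G"
proof -
  assume a: "x \<in> gideal G" "y \<in> gideal G"
  have "x + - y \<in> gideal G" by (rule gi_add[OF a(1) gi_neg[OF a(2)]])
  then show ?thesis by simp
qed

lemma gi_sum: "(\<And>i. i \<in> I \<Longrightarrow> f i \<in> gideal G) \<Longrightarrow> sum f I \<in> gideal G"
  by (induction I rule: infinite_finite_induct) (auto intro: gi_add gideal_zero)

lemma cg_refl: "p - p \<in> gideal G" by (simp add: gideal_zero)
lemma cg_sym: "p - q \<in> gideal G \<Longrightarrow> q - p \<in> gideal G"
  using gi_neg[of "p - q" G] by simp
lemma cg_trans: "p - q \<in> gideal G \<Longrightarrow> q - r \<in> gideal G \<Longrightarrow> p - r \<in> gideal G"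
  using gi_add[of "p - q" G "q - r"] by simp
lemma cg_diff: "p - q \<in> gideal G \<Longrightarrow> p' - q' \<in> gideal G \<Longrightarrow> (p - p') - (q - q') \<in> gideal G"
  using gi_diff[of "p - q" G "p' - q'"] by (simp add: algebra_simps)
lemma cg_mult: "p - q \<in> gideal G \<Longrightarrow> p' - q' \<in> gideal G \<Longrightarrow> p * p' - q * q' \<in> gideal G"
proof -
  assume a: "p - q \<in> gideal G" "p' - q' \<in> gideal G"
  have "p * p' - q * q' = p * (p' - q') + (p - q) * q'" by (simp add: algebra_simps)
  then show ?thesis using gi_add[OF gi_mult[OF a(2)] gi_mult2[OF a(1)]] by simp
qed
lemma cg_sum: "(\<And>i. i \<in> I \<Longrightarrow> f i - g i \<in> gideal G) \<Longrightarrow> sum f I - sum g I \<in> gideal G"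
  using gi_sum[of I "\<lambda>i. f i - g i" G] by (simp add: sum_subtractf)

lemma cong2_trans: "cong2 \<phi> p q \<Longrightarrow> cong2 \<phi> q r \<Longrightarrow> cong2 \<phi> p r"
  unfolding cong2_def J2_def by (rule cg_trans)
lemma cong2_sym: "cong2 \<phi> p q \<Longrightarrow> cong2 \<phi> q p"
  unfolding cong2_def J2_def by (rule cg_sym)
lemma cong2_refl: "cong2 \<phi> p p"
  unfolding cong2_def J2_def by (rule cg_refl)
lemma cong2_diff: "cong2 \<phi> p q \<Longrightarrow> cong2 \<phi> p' q' \<Longrightarrow> cong2 \<phi> (p - p') (q - q')"
  unfolding cong2_def J2_def by (rule cg_diff)
lemma cong2_mult: "cong2 \<phi> p q \<Longrightarrow> cong2 \<phi> p' q' \<Longrightarrow> cong2 \<phi> (p * p') (q * q')"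
  unfolding cong2_def J2_def by (rule cg_mult)
lemma cong2_sum: "(\<And>i. i \<in> I \<Longrightarrow> cong2 \<phi> (f i) (g i)) \<Longrightarrow> cong2 \<phi> (sum f I) (sum g I)"
  unfolding cong2_def J2_def by (rule cg_sum)
lemma cong3_trans: "cong3 \<phi> p q \<Longrightarrow> cong3 \<phi> q r \<Longrightarrow> cong3 \<phi> p r"
  unfolding cong3_def J3_def by (rule cg_trans)

lemma hom_0: "alg_hom_rep f \<Longrightarrow> f 0 = 0"
proof -
  assume h: "alg_hom_rep f"
  have "f (0 + 0) = f 0 + f 0" using h unfolding alg_hom_rep_def by blast
  then show ?thesis by simp
qed
lemma hom_sum: "alg_hom_rep f \<Longrightarrow> f (sum g I) = (\<Sum>i\<in>I. f (g i))"
  by (induction I rule: infinite_finite_induct) (auto simp: hom_0 alg_hom_rep_def)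
lemma hom_mult: "alg_hom_rep f \<Longrightarrow> f (p * q) = f p * f q"
  unfolding alg_hom_rep_def by simp
lemma hom_diff: "alg_hom_rep f \<Longrightarrow> f (p - q) = f p - f q"
proof -
  assume h: "alg_hom_rep f"
  have "f ((p - q) + q) = f (p - q) + f q" using h unfolding alg_hom_rep_def by blast
  then show ?thesis by simp
qed
lemma hom_const: "alg_hom_rep f \<Longrightarrow> f (pconst c) = pconst c"
  unfolding alg_hom_rep_def by simp

lemma psubst_sumk: "psubst f p = sumk (\<lambda>m. \<Prod>v\<in>Poly_Mapping.keys m. f v ^ Poly_Mapping.lookup m v) p"
  unfolding psubst_def sumk_def ..

lemma psubst_pvar: "psubst f (pvar x) = f x"
  by (simp add: psubst_sumk pvar_def sumk_single)
lemma psubst_pconst: "psubst f (pconst c) = pconst c"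
  by (simp add: psubst_sumk pconst_def sumk_single)
lemma psubst_cvar: "psubst f (pconst c * pvar x) = pconst c * f x"
  by (simp add: psubst_sumk pconst_def pvar_def sumk_single mult_single)
lemma psubst_diff: "psubst f (p - q) = psubst f p - psubst f q"
  by (simp add: psubst_sumk sumk_diff)
lemma psubst_add: "psubst f (p + q) = psubst f p + psubst f q"
  by (simp add: psubst_sumk sumk_add)

lemma embL_pvar: "embL (pvar x) = dT2 x" by (simp add: embL_def psubst_pvar dT2_def)

lemma J2_gen: "g \<in> J1 \<phi> \<Longrightarrow> embL g \<in> J2 \<phi>"
  unfolding J2_def by (rule gi_gen) auto

lemma J1_gen: "g \<in> {pvar (a + b) - pvar a - pvar b | a b. True}
     \<union> {pvar (a * b) - pconst a * pvar b - pconst b * pvar a | a b. True}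
     \<union> {pvar (\<phi> r) | r. True} \<Longrightarrow> g \<in> J1 \<phi>"
  unfolding J1_def by (rule gi_gen)

lemma J2_gen': assumes "g \<in> {pvar (Inr (t + s)) - pvar (Inr t) - pvar (Inr s) | t s. True}
     \<union> {pvar (Inr (t * s)) - embL t * pvar (Inr s) - embL s * pvar (Inr t) | t s. True}
     \<union> {pvar (Inr (pconst (\<phi> r))) | r. True}" shows "g \<in> J2 \<phi>"
  unfolding J2_def by (rule gi_gen) (use assms in blast)

lemma J2_ideal: "J2 \<phi> = gideal (embL ` J1 \<phi>
     \<union> {pvar (Inr t) - pvar (Inr s) | t s. cong1 \<phi> t s}
     \<union> {pvar (Inr (t + s)) - pvar (Inr t) - pvar (Inr s) | t s. True}
     \<union> {pvar (Inr (t * s)) - embL t * pvar (Inr s) - embL s * pvar (Inr t) | t s. True}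
     \<union> {pvar (Inr (pconst (\<phi> r))) | r. True})" by (rule J2_def)

lemma KN_L: assumes "n \<in> KN \<phi>"
  shows "sumk dT2 n \<in> J2 \<phi> \<and> sumk d'T2 n \<in> J2 \<phi>"
  using assms unfolding KN_def
proof (induction n rule: mspan.induct)
  case mspan_zero then show ?case by (simp add: J2_def gideal_zero)
next
  case (mspan_step v w c)
  have g: "sumk dT2 v \<in> J2 \<phi> \<and> sumk d'T2 v \<in> J2 \<phi>"
    using mspan_step(1)
  proof (elim UnE CollectE exE conjE)
    fix a b assume v: "v = dsym (a + b) - dsym a - dsym b"
    have "sumk dT2 v = embL (pvar (a + b) - pvar a - pvar b)"
      by (simp add: v sumk_diff dsym_def sumk_single embL_def psubst_diff psubst_pvar dT2_def)
    moreover have "pvar (a + b) - pvar a - pvar b \<in> J1 \<phi>" by (rule J1_gen) blast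
    moreover have "sumk d'T2 v = pvar (Inr (pconst a + pconst b)) - pvar (Inr (pconst a)) - pvar (Inr (pconst b))"
      by (simp add: v sumk_diff dsym_def sumk_single d'T2_def pconst_add)
    moreover have "\<dots> \<in> J2 \<phi>" by (rule J2_gen') blast
    ultimately show ?thesis using J2_gen by metis
  next
    fix a b assume v: "v = dsym (a * b) - fsmult a (dsym b) - fsmult b (dsym a)"
    have "sumk dT2 v = embL (pvar (a * b) - pconst a * pvar b - pconst b * pvar a)"
      by (simp add: v sumk_diff sumk_fsmult dsym_def sumk_single embL_def psubst_diff psubst_pvar psubst_cvar dT2_def)
    moreover have "pvar (a * b) - pconst a * pvar b - pconst b * pvar a \<in> J1 \<phi>" by (rule J1_gen) blast
    moreover have "sumk d'T2 v = pvar (Inr (pconst a * pconst b)) - embL (pconst a) * pvar (Inr (pconst b)) - embL (pconst b) * pvar (Inr (pconst a))"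
      by (simp add: v sumk_diff sumk_fsmult dsym_def sumk_single d'T2_def pconst_mult embL_def psubst_pconst)
    moreover have "\<dots> \<in> J2 \<phi>" by (rule J2_gen') blast
    ultimately show ?thesis using J2_gen by metis
  next
    fix r assume v: "v = dsym (\<phi> r)"
    have "sumk dT2 v = embL (pvar (\<phi> r))"
      by (simp add: v dsym_def sumk_single embL_pvar)
    moreover have "pvar (\<phi> r) \<in> J1 \<phi>" by (rule J1_gen) blast
    moreover have "sumk d'T2 v = pvar (Inr (pconst (\<phi> r)))"
      by (simp add: v dsym_def sumk_single d'T2_def)
    moreover have "\<dots> \<in> J2 \<phi>" by (rule J2_gen') blast
    ultimately show ?thesis using J2_gen by metis
  qed
  show ?case using g mspan_step(3) unfolding J2_ideal
    by (simp add: sumk_add sumk_fsmult gi_add gi_mult)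
qed

lemma psi_hat_sumk: "psi_hat w = sumk (\<lambda>bc. dT2 (fst bc) * d'T2 (snd bc) - d'T2 (fst bc) * dT2 (snd bc)) w"
  unfolding psi_hat_def sumk_def ..

lemma psi_hat_ftens: "psi_hat (ftens u v) = sumk dT2 u * sumk d'T2 v - sumk d'T2 u * sumk dT2 v"
  by (simp add: psi_hat_sumk sumk_fdiff sumk_ftens)

lemma WN_psi: assumes "w \<in> WN \<phi>" shows "psi_hat w \<in> J2 \<phi>"
  using assms unfolding WN_def
proof (induction w rule: mspan.induct)
  case mspan_zero then show ?case by (simp add: psi_hat_sumk J2_def gideal_zero)
next
  case (mspan_step v w c)
  have g: "psi_hat v \<in> J2 \<phi>"
    using mspan_step(1)
  proof (elim UnE CollectE exE conjE)
    fix n u assume v: "v = ftens n u" and n: "n \<in> KN \<phi>"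
    show ?thesis using KN_L[OF n] unfolding v psi_hat_ftens J2_ideal
      by (intro gi_diff gi_mult gi_mult2) auto
  next
    fix n u assume v: "v = ftens u n" and n: "n \<in> KN \<phi>"
    show ?thesis using KN_L[OF n] unfolding v psi_hat_ftens J2_ideal
      by (intro gi_diff gi_mult gi_mult2) auto
  next
    fix u assume v: "v = ftens u u"
    show ?thesis unfolding v psi_hat_ftens J2_ideal by (simp add: gideal_zero)
  qed
  show ?case using g mspan_step(3) unfolding J2_ideal psi_hat_sumk
    by (simp add: sumk_add sumk_fsmult gi_add gi_mult)
qed


lemma torsion_pvar: "torsion_map cA U H (pvar a) = cA (U (H (d'dT2 a))) - U (H (cA (d'dT2 a)))"
  unfolding torsion_map_def by (rule psubst_pvar)
lemma torsion_pconst: "torsion_map cA U H (pconst a) = pconst a"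
  unfolding torsion_map_def by (rule psubst_pconst)

theorem mainTheorem13:
  fixes \<phi> :: "'r::comm_ring_1 \<Rightarrow> 'a::comm_ring_1"
    and nab :: "('a \<Rightarrow>\<^sub>0 'a) \<Rightarrow> ('a \<times> 'a \<Rightarrow>\<^sub>0 'a)"
    and cA :: "('a T2var,'a) pol \<Rightarrow> ('a T2var,'a) pol"
    and U :: "('a + 'a,'a) pol \<Rightarrow> ('a T2var,'a) pol"
    and H :: "('a T2var,'a) pol \<Rightarrow> ('a + 'a,'a) pol"
  assumes hom: "ring_hom_map \<phi>"
    and conn: "module_connection \<phi> nab"
    and cA_hom: "alg_hom_rep cA" and cA_wd: "resp_maps cA (cong2 \<phi>) (cong2 \<phi>)"
    and cA_d: "\<And>a. cong2 \<phi> (cA (dT2 a)) (d'T2 a)"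
    and cA_d': "\<And>a. cong2 \<phi> (cA (d'T2 a)) (dT2 a)"
    and cA_d'd: "\<And>a. cong2 \<phi> (cA (d'dT2 a)) (d'dT2 a)"
    and U_hom: "alg_hom_rep U" and U_wd: "resp_maps U (cong3 \<phi>) (cong2 \<phi>)"
    and U_l: "\<And>a. cong2 \<phi> (U (pvar (Inl a))) (d'T2 a)"
    and U_r: "\<And>a. cong2 \<phi> (U (pvar (Inr a))) (dT2 a)"
    and H_hom: "alg_hom_rep H" and H_wd: "resp_maps H (cong2 \<phi>) (cong3 \<phi>)"
    and H_d'd: "\<And>a. cong3 \<phi> (H (d'dT2 a)) (tens_emb (nab (dsym a)))"
  shows "(\<forall>a. cong2 \<phi> (torsion_map cA U H (pconst a)) (pconst a)
            \<and> cong2 \<phi> (torsion_map cA U H (pvar a)) (psi_hat (nab (dsym a))))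
       \<and> ((\<forall>a. nab (dsym a) \<in> WN \<phi>) \<longrightarrow> (\<forall>a. cong2 \<phi> (torsion_map cA U H (pvar a)) 0))"
proof -
  have main: "cong2 \<phi> (torsion_map cA U H (pvar a)) (psi_hat (nab (dsym a)))" for a
  proof -
    define w where "w = nab (dsym a)"
    define T where "T = tens_emb w"
    define K where "K = Poly_Mapping.keys w"
    define P where "P = (\<Sum>bc\<in>K. pconst (Poly_Mapping.lookup w bc) * d'T2 (fst bc) * dT2 (snd bc))"
    define Q where "Q = (\<Sum>bc\<in>K. pconst (Poly_Mapping.lookup w bc) * dT2 (fst bc) * d'T2 (snd bc))"
    have h1: "cong3 \<phi> (H (d'dT2 a)) T" unfolding T_def w_def by (rule H_d'd)
    have "cong3 \<phi> (H (cA (d'dT2 a))) (H (d'dT2 a))"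
      using H_wd cA_d'd unfolding resp_maps_def by blast
    then have h2: "cong3 \<phi> (H (cA (d'dT2 a))) T" using h1 by (rule cong3_trans)
    have h3: "cong2 \<phi> (U (H (d'dT2 a))) (U T)" using U_wd h1 unfolding resp_maps_def by blast
    have h4: "cong2 \<phi> (U (H (cA (d'dT2 a)))) (U T)" using U_wd h2 unfolding resp_maps_def by blast
    have h5: "cong2 \<phi> (cA (U (H (d'dT2 a)))) (cA (U T))" using cA_wd h3 unfolding resp_maps_def by blast
    have UT: "U T = (\<Sum>bc\<in>K. pconst (Poly_Mapping.lookup w bc) * U (pvar (Inl (fst bc))) * U (pvar (Inr (snd bc))))"
      unfolding T_def tens_emb_def K_def by (simp add: hom_sum[OF U_hom] hom_mult[OF U_hom] hom_const[OF U_hom])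
    have h6: "cong2 \<phi> (U T) P" unfolding UT P_def
      by (intro cong2_sum cong2_mult cong2_refl U_l U_r)
    have h7: "cong2 \<phi> (cA (U T)) (cA P)" using cA_wd h6 unfolding resp_maps_def by blast
    have cAP: "cA P = (\<Sum>bc\<in>K. pconst (Poly_Mapping.lookup w bc) * cA (d'T2 (fst bc)) * cA (dT2 (snd bc)))"
      unfolding P_def by (simp add: hom_sum[OF cA_hom] hom_mult[OF cA_hom] hom_const[OF cA_hom])
    have h8: "cong2 \<phi> (cA P) Q" unfolding cAP Q_def
      by (intro cong2_sum cong2_mult cong2_refl cA_d cA_d')
    have h9: "cong2 \<phi> (cA (U T)) Q" using h7 h8 by (rule cong2_trans)
    have "cong2 \<phi> (torsion_map cA U H (pvar a)) (cA (U T) - U T)"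
      unfolding torsion_pvar by (rule cong2_diff[OF h5 h4])
    moreover have "cong2 \<phi> (cA (U T) - U T) (Q - P)" by (rule cong2_diff[OF h9 h6])
    moreover have "Q - P = psi_hat w"
      unfolding Q_def P_def psi_hat_def K_def sum_subtractf[symmetric]
      by (rule sum.cong) (simp_all add: algebra_simps)
    ultimately show ?thesis unfolding w_def by (metis cong2_trans)
  qed
  show ?thesis
  proof (intro conjI allI impI)
    fix a show "cong2 \<phi> (torsion_map cA U H (pconst a)) (pconst a)"
      unfolding torsion_pconst by (rule cong2_refl)
  next
    fix a show "cong2 \<phi> (torsion_map cA U H (pvar a)) (psi_hat (nab (dsym a)))" by (rule main)
  next
    fix a assume W: "\<forall>a. nab (dsym a) \<in> WN \<phi>"
    have "cong2 \<phi> (psi_hat (nab (dsym a))) 0"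
      using WN_psi[of "nab (dsym a)" \<phi>] W unfolding cong2_def by simp
    then show "cong2 \<phi> (torsion_map cA U H (pvar a)) 0" using main by (metis cong2_trans)
  qed
qed

end
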